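(* Let $k\ge 2$, let $H$ be a digraph (possibly with loops), and let $D$ be an $H$-colored local out-tournament. If every directed cycle in $D$ has $H$-length at most $k-2$, then $D$ has a $(k,H)$-kernel.
   Context: All digraphs are finite. A local out-tournament is a digraph $D$ such that for every vertex $x$, the subdigraph induced by the out-neighbourhood $N^+(x)$ is a tournament (every two distinct vertices joined by exactly one arc). $D$ has no loops and comes with a map $\rho: A(D)\to V(H)$. For a walk $W=(x_0,\ldots,x_n)$ in $D$, there is an obstruction on $x_i$ if $(\rho(x_{i-1},x_i),\rho(x_i,x_{i+1})) \notin A(H)$; for an open walk this is considered at internal vertices $x_i$, $1\le i\le n-1$, for a closed walk (such as a cycle) at all $i\in\{0,\ldots,n-1\}$ with indices modulo $n$. $O_H(W)$ is the set of indices with an obstruction; the $H$-length is $l_H(W)=|O_H(W)|+1$ for open $W$ and $|O_H(W)|$ for closed $W$. A $(k,H)$-kernel ($k\ge2$) is a set $S\subseteq V(D)$ such that for every two distinct $u,v\in S$ every directed $uv$-path in $D$ has $H$-length at least $k$, and for every $x\in V(D)\setminus S$ there is a directed path from $x$ to a vertex of $S$ of $H$-length at most $k-1$. *)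

theory Defs
  imports Main
begin

text \<open>A digraph D is given by a vertex set V and an arc set A (a relation, so no
multiple arcs).\<close>

definition digraph :: "'a set \<Rightarrow> ('a \<times> 'a) set \<Rightarrow> bool" where
  "digraph V A \<longleftrightarrow> finite V \<and> A \<subseteq> V \<times> V"

definition loopless :: "('a \<times> 'a) set \<Rightarrow> bool" where
  "loopless A \<longleftrightarrow> (\<forall>x. (x, x) \<notin> A)"

definition local_out_tournament :: "'a set \<Rightarrow> ('a \<times> 'a) set \<Rightarrow> bool" where
  "local_out_tournament V A \<longleftrightarrow>
     (\<forall>x\<in>V. \<forall>u v. (x, u) \<in> A \<and> (x, v) \<in> A \<and> u \<noteq> v \<longrightarrow>
        ((u, v) \<in> A \<longleftrightarrow> (v, u) \<notin> A))"

definition H_coloring :: "('a \<times> 'a) set \<Rightarrow> 'c set \<Rightarrow> ('a \<times> 'a \<Rightarrow> 'c) \<Rightarrow> bool" where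
  "H_coloring A VH rho \<longleftrightarrow> (\<forall>a\<in>A. rho a \<in> VH)"

definition dwalk :: "('a \<times> 'a) set \<Rightarrow> 'a list \<Rightarrow> bool" where
  "dwalk A xs \<longleftrightarrow> xs \<noteq> [] \<and> (\<forall>i. Suc i < length xs \<longrightarrow> (xs ! i, xs ! Suc i) \<in> A)"

definition dpath :: "('a \<times> 'a) set \<Rightarrow> 'a list \<Rightarrow> bool" where
  "dpath A xs \<longleftrightarrow> dwalk A xs \<and> distinct xs"

text \<open>A directed cycle (x0,...,x(n-1),x0) is represented by the list [x0,...,x(n-1)].\<close>
definition dcycle :: "('a \<times> 'a) set \<Rightarrow> 'a list \<Rightarrow> bool" where
  "dcycle A xs \<longleftrightarrow> length xs \<ge> 2 \<and> distinct xs \<and>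
     (\<forall>i < length xs. (xs ! i, xs ! ((i + 1) mod length xs)) \<in> A)"

definition obstructions_open :: "('c \<times> 'c) set \<Rightarrow> ('a \<times> 'a \<Rightarrow> 'c) \<Rightarrow> 'a list \<Rightarrow> nat set" where
  "obstructions_open AH rho xs =
     {i. 1 \<le> i \<and> Suc i < length xs \<and>
         (rho (xs ! (i - 1), xs ! i), rho (xs ! i, xs ! Suc i)) \<notin> AH}"

definition H_length_open :: "('c \<times> 'c) set \<Rightarrow> ('a \<times> 'a \<Rightarrow> 'c) \<Rightarrow> 'a list \<Rightarrow> nat" where
  "H_length_open AH rho xs = card (obstructions_open AH rho xs) + 1"

definition obstructions_closed :: "('c \<times> 'c) set \<Rightarrow> ('a \<times> 'a \<Rightarrow> 'c) \<Rightarrow> 'a list \<Rightarrow> nat set" where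
  "obstructions_closed AH rho xs =
     (let n = length xs in
      {i. i < n \<and>
         (rho (xs ! ((i + n - 1) mod n), xs ! i), rho (xs ! i, xs ! ((i + 1) mod n))) \<notin> AH})"

definition H_length_closed :: "('c \<times> 'c) set \<Rightarrow> ('a \<times> 'a \<Rightarrow> 'c) \<Rightarrow> 'a list \<Rightarrow> nat" where
  "H_length_closed AH rho xs = card (obstructions_closed AH rho xs)"

definition kH_kernel ::
  "'a set \<Rightarrow> ('a \<times> 'a) set \<Rightarrow> ('c \<times> 'c) set \<Rightarrow> ('a \<times> 'a \<Rightarrow> 'c) \<Rightarrow> nat \<Rightarrow> 'a set \<Rightarrow> bool" where
  "kH_kernel V A AH rho k S \<longleftrightarrow> S \<subseteq> V \<and>
     (\<forall>u\<in>S. \<forall>v\<in>S. u \<noteq> v \<longrightarrow>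
        (\<forall>p. dpath A p \<and> hd p = u \<and> last p = v \<longrightarrow> H_length_open AH rho p \<ge> k)) \<and>
     (\<forall>x\<in>V - S. \<exists>p. dpath A p \<and> hd p = x \<and> last p \<in> S \<and> H_length_open AH rho p \<le> k - 1)"

end

theory Submission
  imports Defs
begin

abbreviation E :: "('a \<times> 'a) set \<Rightarrow> 'a \<Rightarrow> 'a \<Rightarrow> bool" where "E A \<equiv> (\<lambda>a b. (a, b) \<in> A)"

lemma dwalk_succ: "dwalk A xs \<longleftrightarrow> xs \<noteq> [] \<and> successively (E A) xs"
  unfolding dwalk_def successively_conv_nth by auto

lemma dcycle_alt: "dcycle A C \<longleftrightarrow> dpath A C \<and> length C \<ge> 2 \<and> (last C, hd C) \<in> A"
proof
  assume c: "dcycle A C"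
  then have l: "length C \<ge> 2" and d: "distinct C" and arcs: "\<forall>i < length C. (C ! i, C ! ((i + 1) mod length C)) \<in> A"
    unfolding dcycle_def by auto
  have "dwalk A C" unfolding dwalk_def
  proof (intro conjI allI impI)
    show "C \<noteq> []" using l by auto
    fix i assume "Suc i < length C"
    then show "(C ! i, C ! Suc i) \<in> A" using arcs[rule_format, of i] by simp
  qed
  moreover have "(last C, hd C) \<in> A"
  proof -
    have "Suc (length C - 1) = length C" "C \<noteq> []" using l by auto
    then show ?thesis using arcs[rule_format, of "length C - 1"] l by (simp add: last_conv_nth hd_conv_nth)
  qed
  ultimately show "dpath A C \<and> length C \<ge> 2 \<and> (last C, hd C) \<in> A" using l d by (simp add: dpath_def)
next
  assume h: "dpath A C \<and> length C \<ge> 2 \<and> (last C, hd C) \<in> A"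
  show "dcycle A C" unfolding dcycle_def
  proof (intro conjI allI impI)
    show "length C \<ge> 2" "distinct C" using h by (auto simp: dpath_def)
    fix i assume i: "i < length C"
    show "(C ! i, C ! ((i + 1) mod length C)) \<in> A"
    proof (cases "Suc i < length C")
      case True then show ?thesis using h by (simp add: dpath_def dwalk_def)
    next
      case False
      then have "i = length C - 1" using i by simp
      moreover have "Suc (length C - 1) = length C" "C \<noteq> []" using h by auto
      ultimately show ?thesis using h i by (simp add: last_conv_nth hd_conv_nth)
    qed
  qed
qed

lemma dcycle_rotate1: "dcycle A C \<Longrightarrow> dcycle A (rotate1 C)"
proof -
  assume c: "dcycle A C"
  then have p: "dpath A C" and cl: "(last C, hd C) \<in> A" and l: "length C \<ge> 2" unfolding dcycle_alt by auto
  then obtain a xs where C: "C = a # xs" by (cases C) auto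
  with l have xs: "xs \<noteq> []" by auto
  show ?thesis using p cl C
    unfolding dcycle_alt dpath_def dwalk_succ using xs
    by (auto simp: successively_append_iff successively_Cons Suc_le_eq)
qed

lemma dcycle_rotate: "dcycle A C \<Longrightarrow> dcycle A (rotate n C)"
  by (induction n) (auto intro: dcycle_rotate1)

lemma dwalk_rtrancl: "dwalk A p \<Longrightarrow> (hd p, last p) \<in> A\<^sup>*"
proof (induction p)
  case Nil then show ?case by (simp add: dwalk_def)
next
  case (Cons a p)
  show ?case
  proof (cases p)
    case Nil then show ?thesis by simp
  next
    case (Cons b q)
    with Cons.prems have "dwalk A p" "(a, hd p) \<in> A"
      by (auto simp: dwalk_succ)
    with Cons.IH Cons show ?thesis by auto
  qed
qed

lemma succ_join: "successively P (xs @ [y]) \<Longrightarrow> successively P (y # zs) \<Longrightarrow> successively P (xs @ y # zs)"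
proof (induction xs)
  case Nil then show ?case by simp
next
  case (Cons a xs)
  then show ?case by (cases xs) auto
qed

lemma succ_split: "successively P (xs @ ys) \<Longrightarrow> successively P xs \<and> successively P ys"
  by (simp add: successively_append_iff)

lemma walk_to_path:
  "dwalk A q \<Longrightarrow> \<exists>q'. dpath A q' \<and> hd q' = hd q \<and> last q' = last q \<and> set q' \<subseteq> set q
      \<and> set (butlast q') \<subseteq> set (butlast q)"
proof (induction "length q" arbitrary: q rule: less_induct)
  case less
  show ?case
  proof (cases "distinct q")
    case True then show ?thesis using less.prems by (auto simp: dpath_def)
  next
    case False
    then obtain xs ys zs y where q: "q = xs @ [y] @ ys @ [y] @ zs"
      using not_distinct_decomp by blast
    let ?q = "xs @ y # zs"
    have sq: "successively (E A) q" using less.prems by (simp add: dwalk_succ)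
    have s1: "successively (E A) (xs @ [y])"
      using succ_split[of "E A" "xs @ [y]" "ys @ [y] @ zs"] sq unfolding q by simp
    have s2: "successively (E A) (y # zs)"
      using succ_split[of "E A" "xs @ [y] @ ys" "y # zs"] sq unfolding q by simp
    have w: "dwalk A ?q" unfolding dwalk_succ using succ_join[OF s1 s2] by simp
    have "length ?q < length q" using q by simp
    from less.hyps[OF this w] obtain q' where q': "dpath A q'" "hd q' = hd ?q" "last q' = last ?q"
      "set q' \<subseteq> set ?q" "set (butlast q') \<subseteq> set (butlast ?q)" by blast
    have h1: "hd ?q = hd q" unfolding q by (cases xs) simp_all
    have h2: "last ?q = last q" unfolding q by (cases zs rule: rev_cases) simp_all
    have h3: "set ?q \<subseteq> set q" unfolding q by auto
    have h4: "set (butlast ?q) \<subseteq> set (butlast q)"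
    proof (cases zs rule: rev_cases)
      case Nil then show ?thesis unfolding q by (auto simp: butlast_append)
    next
      case (snoc us u) then show ?thesis unfolding q by (auto simp: butlast_append)
    qed
    show ?thesis
    proof (intro exI[of _ q'] conjI)
      show "dpath A q'" by fact
      show "hd q' = hd q" using q'(2) h1 by simp
      show "last q' = last q" using q'(3) h2 by simp
      show "set q' \<subseteq> set q" using q'(4) h3 by blast
      show "set (butlast q') \<subseteq> set (butlast q)" using q'(5) h4 by blast
    qed
  qed
qed

lemma rtrancl_walk: "(a, b) \<in> A\<^sup>* \<Longrightarrow> \<exists>p. dwalk A p \<and> hd p = a \<and> last p = b"
proof (induction rule: converse_rtrancl_induct)
  case base then show ?case by (auto intro!: exI[of _ "[b]"] simp: dwalk_def)
next
  case (step y z)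
  then obtain p where p: "dwalk A p" "hd p = z" "last p = b" by blast
  then have "p \<noteq> []" "successively (E A) p" by (auto simp: dwalk_succ)
  then have "dwalk A (y # p)" using p step(1) by (simp add: dwalk_succ successively_Cons)
  moreover have "hd (y # p) = y" "last (y # p) = b" using p \<open>p \<noteq> []\<close> by auto
  ultimately show ?case by blast
qed

lemma rtrancl_path: "(a, b) \<in> A\<^sup>* \<Longrightarrow> \<exists>p. dpath A p \<and> hd p = a \<and> last p = b"
proof -
  assume "(a, b) \<in> A\<^sup>*"
  from rtrancl_walk[OF this] obtain p where p: "dwalk A p" "hd p = a" "last p = b" by blast
  from walk_to_path[OF p(1)] obtain q where "dpath A q" "hd q = hd p" "last q = last p" by blast
  then show ?thesis using p by blast
qed

lemma rtrancl_hit: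
  assumes "(a, b) \<in> A\<^sup>*" "a \<notin> X" "b \<in> X"
  shows "\<exists>q. dpath A q \<and> hd q = a \<and> last q \<in> X \<and> set (butlast q) \<inter> X = {}"
proof -
  have "a \<notin> X \<longrightarrow> (\<exists>q. dwalk A q \<and> hd q = a \<and> last q \<in> X \<and> set (butlast q) \<inter> X = {})"
    using assms(1)
  proof (induction rule: converse_rtrancl_induct)
    case base then show ?case using assms(3) by simp
  next
    case (step y z)
    show ?case
    proof (cases "z \<in> X")
      case True
      have "dwalk A [y, z]" using step(1) by (simp add: dwalk_succ)
      moreover have "set (butlast [y, z]) \<inter> X = {}" if "y \<notin> X" using that by simp
      ultimately show ?thesis using True by fastforce
    next
      case False
      then obtain p where p: "dwalk A p" "hd p = z" "last p \<in> X" "set (butlast p) \<inter> X = {}" using step(3) by blast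
      then have "p \<noteq> []" "successively (E A) p" by (auto simp: dwalk_succ)
      then have "dwalk A (y # p)" using p step(1) by (simp add: dwalk_succ successively_Cons)
      moreover have "hd (y # p) = y" "last (y # p) \<in> X" using p \<open>p \<noteq> []\<close> by auto
      moreover have "set (butlast (y # p)) \<inter> X = {}" if "y \<notin> X" using p \<open>p \<noteq> []\<close> that by auto
      ultimately show ?thesis by blast
    qed
  qed
  then have "\<exists>q. dwalk A q \<and> hd q = a \<and> last q \<in> X \<and> set (butlast q) \<inter> X = {}" using assms(2) by (rule mp)
  then obtain q where q: "dwalk A q" "hd q = a" "last q \<in> X" "set (butlast q) \<inter> X = {}" by (elim exE conjE)
  from walk_to_path[OF q(1)] obtain q' where q': "dpath A q'" "hd q' = hd q" "last q' = last q" "set (butlast q') \<subseteq> set (butlast q)"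
    by (elim exE conjE)
  have "set (butlast q') \<inter> X = {}" using q'(4) q(4) by auto
  moreover have "hd q' = a" "last q' \<in> X" using q q' by auto
  ultimately show ?thesis using q'(1) by (intro exI[of _ q']) simp
qed

lemma exit_arc:
  assumes "(a, b) \<in> A\<^sup>*" "a \<in> X" "b \<notin> X"
  shows "\<exists>c v. c \<in> X \<and> v \<notin> X \<and> (c, v) \<in> A \<and> (v, b) \<in> A\<^sup>*"
  using assms
proof (induction rule: converse_rtrancl_induct)
  case base then show ?case by simp
next
  case (step y z)
  then show ?case by (cases "z \<in> X") auto
qed


lemma cycle_extend:
  assumes c: "dcycle A C" and j: "j < length C" and q: "dpath A q" "hd q = v" "last q = C ! j"
    and v: "v \<notin> set C" and disj: "set (butlast q) \<inter> set C = {}"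
    and arc: "(C ! ((j + length C - 1) mod length C), v) \<in> A"
  shows "\<exists>C'. dcycle A C' \<and> set C \<subseteq> set C' \<and> length C < length C'"
proof -
  define n where "n = length C"
  have n2: "n \<ge> 2" using c unfolding dcycle_def n_def by auto
  define R where "R = rotate j C"
  have cR: "dcycle A R" unfolding R_def using c by (rule dcycle_rotate)
  have lR: "length R = n" "set R = set C" unfolding R_def n_def by auto
  have "C \<noteq> []" using n2 n_def by auto
  then have hR: "hd R = C ! j" unfolding R_def using j by (simp add: hd_rotate_conv_nth)
  have "R \<noteq> []" using n2 lR by auto
  then have "last R = R ! (n - 1)" using lR by (simp add: last_conv_nth)
  also have "\<dots> = C ! ((j + (n - 1)) mod n)" unfolding R_def using n2 by (simp add: nth_rotate n_def)
  also have "j + (n - 1) = j + n - 1" using n2 by simp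
  finally have lastR: "last R = C ! ((j + n - 1) mod n)" .
  have "q \<noteq> []" using q by (simp add: dpath_def dwalk_def)
  then have "q = butlast q @ [C ! j]" using q(3) append_butlast_last_id[of q] by simp
  then obtain qs where qs: "q = qs @ [C ! j]" by blast
  have "qs \<noteq> []" using qs q(2) v j by (cases qs) auto
  have bq: "butlast q = qs" using qs by simp
  have hqs: "hd qs = v" using qs q(2) \<open>qs \<noteq> []\<close> by simp
  have sq: "successively (E A) qs" "E A (last qs) (C ! j)" "distinct qs"
    using q \<open>qs \<noteq> []\<close> unfolding qs dpath_def dwalk_succ by (auto simp: successively_append_iff)
  have sR: "successively (E A) R" "distinct R" "R \<noteq> []" using cR unfolding dcycle_alt dpath_def dwalk_succ by auto
  have "dcycle A (R @ qs)"
    unfolding dcycle_alt dpath_def dwalk_succ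
    using sq sR \<open>qs \<noteq> []\<close> hqs hR lastR arc disj bq lR n2
    by (auto simp: successively_append_iff n_def)
  moreover have "length C < length (R @ qs)" using lR \<open>qs \<noteq> []\<close> n_def by simp
  ultimately show ?thesis using lR by (intro exI[of _ "R @ qs"]) auto
qed

lemma all_dominate:
  assumes lot: "local_out_tournament V A" and AV: "A \<subseteq> V \<times> V" and c: "dcycle A C"
    and v: "v \<notin> set C" and j0: "j0 < length C" "(C ! j0, v) \<in> A"
    and nA: "\<not> (\<exists>j<length C. (C ! j, v) \<in> A \<and> (v, C ! ((j + 1) mod length C)) \<in> A)"
  shows "\<forall>j<length C. (C ! j, v) \<in> A"
proof -
  define n where "n = length C"
  have n2: "n \<ge> 2" using c unfolding dcycle_def n_def by auto
  have arcs: "\<forall>i<n. (C ! i, C ! ((i + 1) mod n)) \<in> A" using c unfolding dcycle_def n_def by auto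
  have all: "(C ! ((j0 + t) mod n), v) \<in> A" for t
  proof (induction t)
    case 0 then show ?case using j0 by (simp add: n_def)
  next
    case (Suc t)
    define a where "a = (j0 + t) mod n"
    have a: "a < n" unfolding a_def using n2 by simp
    have b: "(j0 + Suc t) mod n = (a + 1) mod n" unfolding a_def by (simp add: mod_Suc_eq)
    have ab: "(C ! a, C ! ((a + 1) mod n)) \<in> A" using arcs a by auto
    have "C ! a \<in> V" using ab AV by auto
    moreover have "v \<noteq> C ! ((a + 1) mod n)"
    proof -
      have "0 < length C" using n2 unfolding n_def by linarith
      then have "(a + 1) mod n < length C" unfolding n_def by simp
      then have "C ! ((a + 1) mod n) \<in> set C" by (rule nth_mem)
      then show ?thesis using v by auto
    qed
    moreover have "(v, C ! ((a + 1) mod n)) \<notin> A" using nA Suc a a_def by (auto simp: n_def)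
    ultimately have "(C ! ((a + 1) mod n), v) \<in> A"
      using lot ab Suc unfolding local_out_tournament_def a_def by blast
    then show ?case using b by simp
  qed
  show ?thesis
  proof (intro allI impI)
    fix j assume "j < length C"
    then have "(j0 + (j + n - j0)) mod n = j" using j0 n_def by simp
    then show "(C ! j, v) \<in> A" using all[of "j + n - j0"] by simp
  qed
qed

lemma dcycle_subV: "A \<subseteq> V \<times> V \<Longrightarrow> dcycle A C \<Longrightarrow> set C \<subseteq> V"
proof
  fix z assume AV: "A \<subseteq> V \<times> V" and c: "dcycle A C" and z: "z \<in> set C"
  from z obtain i where i: "i < length C" "C ! i = z" unfolding in_set_conv_nth by blast
  then have "(z, C ! ((i + 1) mod length C)) \<in> A" using c unfolding dcycle_def by auto
  then show "z \<in> V" using AV by blast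
qed

lemma common_cycle:
  assumes lot: "local_out_tournament V A" and AV: "A \<subseteq> V \<times> V" and fin: "finite V"
    and ll: "loopless A" and xy: "x \<noteq> y" "(x, y) \<in> A\<^sup>*" "(y, x) \<in> A\<^sup>*"
  shows "\<exists>C. dcycle A C \<and> x \<in> set C \<and> y \<in> set C"
proof -
  have "\<exists>w. (x, w) \<in> A \<and> (w, y) \<in> A\<^sup>*" using xy(2) xy(1)
    by (cases rule: converse_rtranclE) auto
  then obtain w where w: "(x, w) \<in> A" "(w, y) \<in> A\<^sup>*" by blast
  have "(w, x) \<in> A\<^sup>*" using w xy by auto
  from rtrancl_path[OF this] obtain q where q: "dpath A q" "hd q = w" "last q = x" by blast
  have "w \<noteq> x" using w ll unfolding loopless_def by auto
  have "length q \<ge> 2"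
  proof -
    have "q \<noteq> []" using q by (simp add: dpath_def dwalk_def)
    moreover have "length q \<noteq> 1"
    proof
      assume "length q = 1"
      then have "hd q = last q" by (cases q) auto
      then show False using q \<open>w \<noteq> x\<close> by simp
    qed
    ultimately show ?thesis by (cases q) (auto simp: Suc_le_eq)
  qed
  then have "dcycle A q" using q w unfolding dcycle_alt by simp
  moreover have "x \<in> set q"
  proof -
    have "q \<noteq> []" using \<open>length q \<ge> 2\<close> by auto
    then show ?thesis using q(3) last_in_set[of q] by simp
  qed
  ultimately have ne: "length q \<in> {length C | C. dcycle A C \<and> x \<in> set C}" by blast
  have bd: "{length C | C. dcycle A C \<and> x \<in> set C} \<subseteq> {..card V}"
  proof
    fix l assume "l \<in> {length C | C. dcycle A C \<and> x \<in> set C}"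
    then obtain C where "l = length C" "dcycle A C" by blast
    moreover then have "distinct C" "set C \<subseteq> V" using dcycle_subV[OF AV] by (auto simp: dcycle_def)
    ultimately have "l = card (set C)" "card (set C) \<le> card V"
      using fin card_mono[of V "set C"] by (simp_all add: distinct_card)
    then show "l \<in> {..card V}" by simp
  qed
  define m where "m = Max {length C | C. dcycle A C \<and> x \<in> set C}"
  have finL: "finite {length C | C. dcycle A C \<and> x \<in> set C}" using bd finite_subset by blast
  have "m \<in> {length C | C. dcycle A C \<and> x \<in> set C}" unfolding m_def using finL ne by (intro Max_in) auto
  then obtain C where C: "dcycle A C" "x \<in> set C" "length C = m" by blast
  have maxC: "\<not> (\<exists>C'. dcycle A C' \<and> set C \<subseteq> set C' \<and> length C < length C')"
  proof
    assume "\<exists>C'. dcycle A C' \<and> set C \<subseteq> set C' \<and> length C < length C'"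
    then obtain C' where "dcycle A C'" "set C \<subseteq> set C'" "length C < length C'" by blast
    moreover then have "length C' \<le> m" unfolding m_def using finL C by (intro Max_ge) auto
    ultimately show False using C by simp
  qed
  show ?thesis
  proof (cases "y \<in> set C")
    case True then show ?thesis using C by blast
  next
    case False
    obtain c v where cv: "c \<in> set C" "v \<notin> set C" "(c, v) \<in> A" "(v, y) \<in> A\<^sup>*"
      using exit_arc[OF xy(2) C(2) False] by blast
    have "(v, x) \<in> A\<^sup>*" using cv xy by auto
    from rtrancl_hit[OF this cv(2) C(2)] obtain q where
      q: "dpath A q" "hd q = v" "last q \<in> set C" "set (butlast q) \<inter> set C = {}" by blast
    obtain j0 where j0: "j0 < length C" "C ! j0 = c" using cv(1) unfolding in_set_conv_nth by blast
    define n where "n = length C"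
    have n2: "n \<ge> 2" using C unfolding dcycle_def n_def by auto
    show ?thesis
    proof (cases "\<exists>j<length C. (C ! j, v) \<in> A \<and> (v, C ! ((j + 1) mod length C)) \<in> A")
      case True
      then obtain j where j: "j < n" "(C ! j, v) \<in> A" "(v, C ! ((j + 1) mod n)) \<in> A" unfolding n_def by blast
      define j' where "j' = (j + 1) mod n"
      have j': "j' < n" unfolding j'_def using n2 by simp
      have jj: "(j' + n - 1) mod n = j"
      proof (cases "j + 1 < n")
        case True then show ?thesis unfolding j'_def using j by simp
      next
        case False then have "j = n - 1" using j by simp
        then show ?thesis unfolding j'_def using n2 by simp
      qed
      have "dpath A [v, C ! j']" using j(3) cv(2) j' unfolding dpath_def dwalk_def j'_def n_def
        by (auto simp: less_Suc_eq)
      then have "\<exists>C'. dcycle A C' \<and> set C \<subseteq> set C' \<and> length C < length C'"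
        using cycle_extend[OF C(1), of j' "[v, C ! j']" v] j' cv(2) jj j(2) unfolding n_def by auto
      then show ?thesis using maxC by blast
    next
      case False
      have dom: "\<forall>j<length C. (C ! j, v) \<in> A"
        using all_dominate[OF lot AV C(1) cv(2) j0(1)] j0 cv False by blast
      obtain j where j: "j < n" "last q = C ! j" using q(3) unfolding n_def in_set_conv_nth by auto
      have "(j + n - 1) mod n < n" using n2 by simp
      then have "\<exists>C'. dcycle A C' \<and> set C \<subseteq> set C' \<and> length C < length C'"
        using cycle_extend[OF C(1), of j q v] j q cv(2) dom unfolding n_def by auto
      then show ?thesis using maxC by blast
    qed
  qed
qed

lemma cycle_short_path:
  assumes cyc: "\<forall>C. dcycle A C \<longrightarrow> H_length_closed AH rho C \<le> k - 2" and k: "k \<ge> 2"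
    and c: "dcycle A C" and xy: "x \<in> set C" "y \<in> set C" "x \<noteq> y"
  shows "\<exists>p. dpath A p \<and> hd p = x \<and> last p = y \<and> H_length_open AH rho p \<le> k - 1"
proof -
  define n where "n = length C"
  have n2: "n \<ge> 2" using c unfolding dcycle_def n_def by auto
  obtain i where i: "i < n" "C ! i = x" using xy(1) unfolding n_def in_set_conv_nth by blast
  define R where "R = rotate i C"
  have cR: "dcycle A R" unfolding R_def using c by (rule dcycle_rotate)
  have lR: "length R = n" "set R = set C" unfolding R_def n_def by auto
  have "C \<noteq> []" using n2 n_def by auto
  then have hR: "R ! 0 = x" unfolding R_def using i nth_rotate[of 0 C i] by (simp add: n_def)
  have "y \<in> set R" using xy lR by simp
  then obtain m where m: "m < n" "R ! m = y" using lR unfolding in_set_conv_nth by auto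
  have "m \<noteq> 0"
  proof
    assume "m = 0"
    then show False using m(2) hR xy(3) by simp
  qed
  define p where "p = take (m + 1) R"
  have lp: "length p = m + 1" unfolding p_def using m lR by simp
  have pn: "\<And>t. t \<le> m \<Longrightarrow> p ! t = R ! t" unfolding p_def by simp
  have wR: "dwalk A R" "distinct R" using cR unfolding dcycle_alt dpath_def by auto
  have "dpath A p" unfolding dpath_def dwalk_def
  proof (intro conjI allI impI)
    show "p \<noteq> []" using lp by auto
    show "distinct p" unfolding p_def using wR by simp
    fix t assume "Suc t < length p"
    then show "(p ! t, p ! Suc t) \<in> A" using pn wR lp lR m unfolding dwalk_def by auto
  qed
  moreover have pne: "p \<noteq> []" using lp by (cases p) auto
  moreover have "hd p = x" using pn[of 0] hR hd_conv_nth[OF pne] by simp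
  moreover have "last p = y" using pn[of m] m lp last_conv_nth[OF pne] by simp
  moreover have "H_length_open AH rho p \<le> k - 1"
  proof -
    have sub: "obstructions_open AH rho p \<subseteq> obstructions_closed AH rho R"
    proof
      fix t assume "t \<in> obstructions_open AH rho p"
      then have t: "1 \<le> t" "Suc t < m + 1" and ob: "(rho (p ! (t - 1), p ! t), rho (p ! t, p ! Suc t)) \<notin> AH"
        unfolding obstructions_open_def lp by auto
      have e0: "t + n - 1 = (t - 1) + n" using t by simp
      have e1: "(t + n - 1) mod n = t - 1" unfolding e0 mod_add_self2 using t m by simp
      have e2: "(t + 1) mod n = Suc t" using t m by simp
      show "t \<in> obstructions_closed AH rho R"
        unfolding obstructions_closed_def Let_def lR using ob t m pn e1 e2 by simp
    qed
    have "finite (obstructions_closed AH rho R)" unfolding obstructions_closed_def Let_def by simp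
    then have "card (obstructions_open AH rho p) \<le> H_length_closed AH rho R"
      unfolding H_length_closed_def using sub by (rule card_mono)
    also have "\<dots> \<le> k - 2" using cyc cR by blast
    finally show ?thesis unfolding H_length_open_def using k by simp
  qed
  ultimately show ?thesis by blast
qed

lemma kernel_gen:
  assumes "finite W"
    and "\<forall>U. U \<subseteq> W \<and> U \<noteq> {} \<longrightarrow> (\<exists>x\<in>U. \<forall>y\<in>U. R x y \<longrightarrow> R y x)"
  shows "\<exists>S\<subseteq>W. (\<forall>u\<in>S. \<forall>v\<in>S. u \<noteq> v \<longrightarrow> \<not> R u v) \<and> (\<forall>x\<in>W - S. \<exists>s\<in>S. R x s)"
  using assms
proof (induction W rule: finite_psubset_induct)
  case (psubset W)
  show ?case
  proof (cases "W = {}")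
    case True then show ?thesis by simp
  next
    case False
    have "W \<subseteq> W \<and> W \<noteq> {}" using False by simp
    then have "\<exists>x\<in>W. \<forall>y\<in>W. R x y \<longrightarrow> R y x" using psubset.prems by (elim allE impE)
    then obtain x where x: "x \<in> W" and xs: "\<And>y. y \<in> W \<Longrightarrow> R x y \<Longrightarrow> R y x" by blast
    define W' where "W' = W - {x} - {y. R y x}"
    have sub: "W' \<subset> W" unfolding W'_def using x by auto
    have prop': "\<forall>U. U \<subseteq> W' \<and> U \<noteq> {} \<longrightarrow> (\<exists>x\<in>U. \<forall>y\<in>U. R x y \<longrightarrow> R y x)"
    proof (intro allI impI)
      fix U assume "U \<subseteq> W' \<and> U \<noteq> {}"
      then have "U \<subseteq> W \<and> U \<noteq> {}" using sub by auto
      then show "\<exists>x\<in>U. \<forall>y\<in>U. R x y \<longrightarrow> R y x" using psubset.prems by (elim allE impE)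
    qed
    have "finite W'" using sub psubset.hyps(1) finite_subset by auto
    from psubset.IH[OF sub prop'] obtain S' where S': "S' \<subseteq> W'"
      "\<forall>u\<in>S'. \<forall>v\<in>S'. u \<noteq> v \<longrightarrow> \<not> R u v" "\<forall>z\<in>W' - S'. \<exists>s\<in>S'. R z s"
      by (elim exE conjE)
    have inW': "\<And>z. z \<in> S' \<Longrightarrow> z \<in> W \<and> z \<noteq> x \<and> \<not> R z x" using S'(1) unfolding W'_def by auto
    have "insert x S' \<subseteq> W" using S'(1) x sub by auto
    moreover have "\<forall>u\<in>insert x S'. \<forall>v\<in>insert x S'. u \<noteq> v \<longrightarrow> \<not> R u v"
    proof (intro ballI impI)
      fix u v assume u: "u \<in> insert x S'" and v: "v \<in> insert x S'" and uv: "u \<noteq> v"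
      show "\<not> R u v"
      proof (cases "u = x")
        case True
        then have "v \<in> S'" using v uv by simp
        then show ?thesis using inW'[of v] xs[of v] True by auto
      next
        case False
        then have "u \<in> S'" using u by simp
        show ?thesis
        proof (cases "v = x")
          case True then show ?thesis using inW'[OF \<open>u \<in> S'\<close>] by simp
        next
          case False
          then have "v \<in> S'" using v by simp
          then show ?thesis using S'(2) \<open>u \<in> S'\<close> uv by blast
        qed
      qed
    qed
    moreover have "\<forall>z\<in>W - insert x S'. \<exists>s\<in>insert x S'. R z s"
    proof
      fix z assume z: "z \<in> W - insert x S'"
      show "\<exists>s\<in>insert x S'. R z s"
      proof (cases "R z x")
        case True then show ?thesis by blast
      next
        case False
        then have "z \<in> W' - S'" using z unfolding W'_def by auto
        then obtain s where "s \<in> S'" "R z s" using S'(3) by blast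
        then show ?thesis by blast
      qed
    qed
    ultimately show ?thesis by blast
  qed
qed

theorem theorem28:
  fixes V :: "'a set" and A :: "('a \<times> 'a) set"
    and VH :: "'c set" and AH :: "('c \<times> 'c) set"
    and rho :: "'a \<times> 'a \<Rightarrow> 'c" and k :: nat
  assumes "k \<ge> 2"
    and "digraph V A" and "loopless A"
    and "AH \<subseteq> VH \<times> VH"
    and "H_coloring A VH rho"
    and "local_out_tournament V A"
    and "\<forall>C. dcycle A C \<longrightarrow> H_length_closed AH rho C \<le> k - 2"
  shows "\<exists>S. kH_kernel V A AH rho k S"
proof -
  have fin: "finite V" and AV: "A \<subseteq> V \<times> V" using assms(2) unfolding digraph_def by auto
  define Rk where "Rk x y \<longleftrightarrow> (\<exists>p. dpath A p \<and> hd p = x \<and> last p = y \<and> H_length_open AH rho p \<le> k - 1)" for x y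
  define f where "f z = card {w\<in>V. (w, z) \<in> A\<^sup>*}" for z
  have propU: "\<forall>U. U \<subseteq> V \<and> U \<noteq> {} \<longrightarrow> (\<exists>x\<in>U. \<forall>y\<in>U. Rk x y \<longrightarrow> Rk y x)"
  proof (intro allI impI)
    fix U assume U: "U \<subseteq> V \<and> U \<noteq> {}"
    then have finU: "finite U" using fin finite_subset by blast
    have "Max (f ` U) \<in> f ` U" using U finU by (intro Max_in) auto
    then obtain x where x: "x \<in> U" "f x = Max (f ` U)" by auto
    have xmax: "f y \<le> f x" if "y \<in> U" for y using x finU that by simp
    show "\<exists>x\<in>U. \<forall>y\<in>U. Rk x y \<longrightarrow> Rk y x"
    proof (intro bexI[OF _ x(1)] ballI impI)
      fix y assume y: "y \<in> U" "Rk x y"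
      show "Rk y x"
      proof (cases "y = x")
        case True then show ?thesis using y by simp
      next
        case False
        from y obtain p where p: "dpath A p" "hd p = x" "last p = y" unfolding Rk_def by blast
        then have "dwalk A p" unfolding dpath_def by blast
        from dwalk_rtrancl[OF this] have xy: "(x, y) \<in> A\<^sup>*" using p by simp
        have sub: "{w\<in>V. (w, x) \<in> A\<^sup>*} \<subseteq> {w\<in>V. (w, y) \<in> A\<^sup>*}" using xy by auto
        have "card {w\<in>V. (w, y) \<in> A\<^sup>*} \<le> card {w\<in>V. (w, x) \<in> A\<^sup>*}" using xmax[OF y(1)] unfolding f_def .
        moreover have "card {w\<in>V. (w, x) \<in> A\<^sup>*} \<le> card {w\<in>V. (w, y) \<in> A\<^sup>*}"
          using sub fin by (intro card_mono) auto
        ultimately have "card {w\<in>V. (w, x) \<in> A\<^sup>*} = card {w\<in>V. (w, y) \<in> A\<^sup>*}" by linarith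
        then have eq: "{w\<in>V. (w, x) \<in> A\<^sup>*} = {w\<in>V. (w, y) \<in> A\<^sup>*}"
          using sub fin by (intro card_subset_eq) auto
        have "y \<in> V" using y U by auto
        then have yx: "(y, x) \<in> A\<^sup>*" using eq by blast
        obtain C where C: "dcycle A C" "x \<in> set C" "y \<in> set C"
          using common_cycle[OF assms(6) AV fin assms(3) _ xy yx] False by auto
        show ?thesis unfolding Rk_def
          using cycle_short_path[OF assms(7) assms(1) C(1) C(3) C(2)] False by blast
      qed
    qed
  qed
  obtain S where S: "S \<subseteq> V" "\<forall>u\<in>S. \<forall>v\<in>S. u \<noteq> v \<longrightarrow> \<not> Rk u v" "\<forall>x\<in>V - S. \<exists>s\<in>S. Rk x s"
    using kernel_gen[OF fin propU] by blast
  have "kH_kernel V A AH rho k S"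
    unfolding kH_kernel_def
  proof (intro conjI ballI allI impI)
    show "S \<subseteq> V" by fact
  next
    fix u v p assume uv: "u \<in> S" "v \<in> S" "u \<noteq> v" and p: "dpath A p \<and> hd p = u \<and> last p = v"
    show "H_length_open AH rho p \<ge> k"
    proof (rule ccontr)
      assume "\<not> H_length_open AH rho p \<ge> k"
      then have "Rk u v" unfolding Rk_def using p by (intro exI[of _ p]) auto
      then show False using S uv by blast
    qed
  next
    fix x assume "x \<in> V - S"
    then obtain s where "s \<in> S" "Rk x s" using S by blast
    then show "\<exists>p. dpath A p \<and> hd p = x \<and> last p \<in> S \<and> H_length_open AH rho p \<le> k - 1"
      unfolding Rk_def by blast
  qed
  then show ?thesis by blast
qed

end
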